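(* Let $(X,d)$ be a compact metric space and let $f_{1,\infty}=\{f_n\}_{n=1}^\infty$ be a sequence of continuous maps $f_n:X\to X$ which is $k$-periodic for some $k\in\mathbb{N}$, i.e. $f_{j+kl}=f_j$ for all $l\in\mathbb{N}$ and all $1\le j\le k$. Then the non-autonomous system $(X,f_{1,\infty})$ is strongly multi-sensitive if and only if the autonomous system $(X, f_k\circ\cdots\circ f_1)$ is strongly multi-sensitive. Likewise, $(X,f_{1,\infty})$ is $\mathcal{N}$-sensitive if and only if $(X, f_k\circ\cdots\circ f_1)$ is $\mathcal{N}$-sensitive.
   Context: For a sequence $f_{1,\infty}=\{f_n\}$ of continuous self-maps of a compact metric space $(X,d)$, write $f_i^n=f_{n+i-1}\circ\cdots\circ f_i$ and $f_i^0=\mathrm{id}$; an autonomous system $(X,f)$ is the case $f_n=f$ for all $n$. For $k\in\mathbb{N}$ the $k$-th iterate is $f_{1,\infty}^{[k]}=\{f^k_{k(n-1)+1}\}_{n=1}^\infty$ (so its $n$-fold composition starting at index $1$ is $f_1^{kn}$). For $V\subseteq X$ and $\delta>0$, $N_{f_{1,\infty}}(V,\delta)=\{n\in\mathbb{N}: \exists u,v\in V,\ d(f_1^n(u),f_1^n(v))>\delta\}$. For $\mathbf{v}=(v_1,\dots,v_r)\in\mathbb{N}^r$, $(X,f_{1,\infty})$ is multi-sensitive with respect to $\mathbf{v}$ if there is $\delta>0$ such that for all nonempty open $U_1,\dots,U_r\subseteq X$, $\bigcap_{i=1}^r N_{f_{1,\infty}^{[v_i]}}(U_i,\delta)\neq\varnothing$.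 The system is $\mathcal{N}$-sensitive if it is multi-sensitive with respect to $(1,2,\dots,n)$ for every $n\in\mathbb{N}$, and strongly multi-sensitive if it is multi-sensitive with respect to every vector in $\mathbb{N}^r$, for every $r\in\mathbb{N}$. *)

theory Defs
  imports "HOL-Analysis.Analysis"
begin

text \<open>Non-autonomous dynamical systems: a sequence f 1, f 2, ... of self-maps of a
compact metric space X (given as a compact subset of a metric space type; the value
f 0 is irrelevant).\<close>

primrec comp_seq :: "(nat \<Rightarrow> 'a \<Rightarrow> 'a) \<Rightarrow> nat \<Rightarrow> nat \<Rightarrow> 'a \<Rightarrow> 'a" where
  "comp_seq f i 0 = id"
| "comp_seq f i (Suc n) = f (i + n) \<circ> comp_seq f i n"

definition iter_seq :: "nat \<Rightarrow> (nat \<Rightarrow> 'a \<Rightarrow> 'a) \<Rightarrow> nat \<Rightarrow> 'a \<Rightarrow> 'a" where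
  "iter_seq k f = (\<lambda>n. comp_seq f (k * (n - 1) + 1) k)"

definition N_set :: "(nat \<Rightarrow> 'a::metric_space \<Rightarrow> 'a) \<Rightarrow> 'a set \<Rightarrow> real \<Rightarrow> nat set" where
  "N_set f V \<delta> = {n. n \<ge> 1 \<and> (\<exists>u\<in>V. \<exists>v\<in>V. dist (comp_seq f 1 n u) (comp_seq f 1 n v) > \<delta>)}"

definition multi_sensitive ::
  "'a::metric_space set \<Rightarrow> (nat \<Rightarrow> 'a \<Rightarrow> 'a) \<Rightarrow> nat list \<Rightarrow> bool" where
  "multi_sensitive X f vs \<longleftrightarrow>
     (\<exists>\<delta>>0. \<forall>Us. length Us = length vs \<longrightarrow>
        (\<forall>U\<in>set Us. openin (top_of_set X) U \<and> U \<noteq> {}) \<longrightarrow>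
        (\<Inter>i<length vs. N_set (iter_seq (vs ! i) f) (Us ! i) \<delta>) \<noteq> {})"

definition N_sensitive :: "'a::metric_space set \<Rightarrow> (nat \<Rightarrow> 'a \<Rightarrow> 'a) \<Rightarrow> bool" where
  "N_sensitive X f \<longleftrightarrow> (\<forall>n\<ge>1. multi_sensitive X f [1..<n+1])"

definition strongly_multi_sensitive ::
  "'a::metric_space set \<Rightarrow> (nat \<Rightarrow> 'a \<Rightarrow> 'a) \<Rightarrow> bool" where
  "strongly_multi_sensitive X f \<longleftrightarrow>
     (\<forall>vs. vs \<noteq> [] \<longrightarrow> (\<forall>v\<in>set vs. v \<ge> 1) \<longrightarrow> multi_sensitive X f vs)"

definition autonomous :: "('a \<Rightarrow> 'a) \<Rightarrow> nat \<Rightarrow> 'a \<Rightarrow> 'a" where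
  "autonomous g = (\<lambda>_. g)"

end

theory Submission
  imports Defs
begin

lemma comp_seq_add: "comp_seq f i (a + b) = comp_seq f (i + a) b \<circ> comp_seq f i a"
  by (induction b) (auto simp: add.assoc)

lemma comp_seq_iter: "comp_seq (iter_seq v f) 1 n = comp_seq f 1 (v * n)"
proof (induction n)
  case 0 then show ?case by simp
next
  case (Suc n)
  have "comp_seq (iter_seq v f) 1 (Suc n) = comp_seq f (v * n + 1) v \<circ> comp_seq f 1 (v * n)"
    using Suc by (simp add: iter_seq_def)
  also have "\<dots> = comp_seq f 1 (v * n + v)"
    using comp_seq_add[of f 1 "v * n" v] by (simp add: add.commute)
  finally show ?case by (simp add: add.commute)
qed

lemma comp_seq_aut: "comp_seq (autonomous g) i n = g ^^ n"
  by (induction n) (auto simp: autonomous_def)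

lemma comp_seq_period:
  assumes "\<And>j l. 1 \<le> j \<Longrightarrow> j \<le> k \<Longrightarrow> f (j + k * l) = f j"
  shows "comp_seq f (1 + k * l) k = comp_seq f 1 k"
proof -
  have "\<And>m. m \<le> k \<Longrightarrow> comp_seq f (1 + k * l) m = comp_seq f 1 m"
  proof -
    fix m show "m \<le> k \<Longrightarrow> comp_seq f (1 + k * l) m = comp_seq f 1 m"
    proof (induction m)
      case 0 then show ?case by simp
    next
      case (Suc m)
      have "f (1 + k * l + m) = f (1 + m)"
        using assms[of "1+m" l] Suc.prems by (simp add: add.commute add.left_commute)
      then show ?case using Suc by simp
    qed
  qed
  then show ?thesis by simp
qed

lemma comp_seq_mult:
  assumes "\<And>j l. 1 \<le> j \<Longrightarrow> j \<le> k \<Longrightarrow> f (j + k * l) = f j"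
  shows "comp_seq f 1 (k * m) = comp_seq f 1 k ^^ m"
proof (induction m)
  case 0 then show ?case by simp
next
  case (Suc m)
  have "comp_seq f 1 (k * Suc m) = comp_seq f (1 + k * m) k \<circ> comp_seq f 1 (k * m)"
    using comp_seq_add[of f 1 "k * m" k] by (simp add: add.commute)
  also have "\<dots> = comp_seq f 1 k \<circ> comp_seq f 1 k ^^ m"
    using comp_seq_period[OF assms] Suc by simp
  finally show ?case by (simp add: funpow_Suc_right[symmetric] funpow.simps)
qed

lemma N_iter: "n \<in> N_set (iter_seq v f) U \<delta> \<longleftrightarrow>
   n \<ge> 1 \<and> (\<exists>u\<in>U. \<exists>w\<in>U. dist (comp_seq f 1 (v * n) u) (comp_seq f 1 (v * n) w) > \<delta>)"
  unfolding N_set_def comp_seq_iter by simp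

lemma N_aut:
  assumes "\<And>j l. 1 \<le> j \<Longrightarrow> j \<le> k \<Longrightarrow> f (j + k * l) = f j"
  shows "n \<in> N_set (iter_seq v (autonomous (comp_seq f 1 k))) U \<delta> \<longleftrightarrow>
   n \<ge> 1 \<and> (\<exists>u\<in>U. \<exists>w\<in>U. dist (comp_seq f 1 (k * (v * n)) u) (comp_seq f 1 (k * (v * n)) w) > \<delta>)"
proof -
  have eq: "comp_seq f 1 (k * (v * n)) = comp_seq f 1 k ^^ (v * n)"
    by (rule comp_seq_mult[OF assms])
  show ?thesis unfolding N_iter comp_seq_aut eq ..
qed

declare upt_Suc[simp del]

theorem mainTheorem1:
  fixes X :: "'a::metric_space set" and f :: "nat \<Rightarrow> 'a \<Rightarrow> 'a" and k :: nat
  assumes "compact X"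
    and "\<And>n. n \<ge> 1 \<Longrightarrow> continuous_on X (f n)"
    and "\<And>n. n \<ge> 1 \<Longrightarrow> f n ` X \<subseteq> X"
    and "k \<ge> 1"
    and "\<And>j l. 1 \<le> j \<Longrightarrow> j \<le> k \<Longrightarrow> f (j + k * l) = f j"
  shows "(strongly_multi_sensitive X f \<longleftrightarrow>
            strongly_multi_sensitive X (autonomous (comp_seq f 1 k)))
       \<and> (N_sensitive X f \<longleftrightarrow> N_sensitive X (autonomous (comp_seq f 1 k)))"
proof -
  note P = assms(5)
  let ?F = "autonomous (comp_seq f 1 k)"
  have A1: "n \<in> N_set (iter_seq (k * v) f) U \<delta> \<longleftrightarrow> n \<in> N_set (iter_seq v ?F) U \<delta>" for n v U \<delta>
  proof -
    have e: "k * v * n = k * (v * n)" by simp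
    show ?thesis by (rule trans[OF N_iter[of n "k * v" f U \<delta>, unfolded e] N_aut[OF P, of n v U \<delta>, symmetric]])
  qed
  have A2: "n \<in> N_set (iter_seq v ?F) U \<delta> \<Longrightarrow> n * k \<in> N_set (iter_seq v f) U \<delta>" for n v U \<delta>
  proof -
    assume a: "n \<in> N_set (iter_seq v ?F) U \<delta>"
    have e: "v * (n * k) = k * (v * n)" by simp
    have "n * k \<ge> 1" using a assms(4) unfolding N_set_def by simp
    moreover have "\<exists>u\<in>U. \<exists>w\<in>U. dist (comp_seq f 1 (k * (v * n)) u) (comp_seq f 1 (k * (v * n)) w) > \<delta>"
      using a N_aut[OF P, of n v U \<delta>] by blast
    ultimately show ?thesis unfolding N_iter[of "n * k" v f U \<delta>] e by blast
  qed
  have S1: "multi_sensitive X ?F vs" if "multi_sensitive X f (map ((*) k) vs)" for vs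
  proof -
    from that obtain \<delta> where d: "\<delta> > 0" and H: "\<forall>Us. length Us = length vs \<longrightarrow>
        (\<forall>U\<in>set Us. openin (top_of_set X) U \<and> U \<noteq> {}) \<longrightarrow>
        (\<Inter>i<length vs. N_set (iter_seq (map ((*) k) vs ! i) f) (Us ! i) \<delta>) \<noteq> {}"
      unfolding multi_sensitive_def length_map by blast
    show ?thesis unfolding multi_sensitive_def
    proof (intro exI[of _ \<delta>] conjI allI impI d)
      fix Us :: "'a set list"
      assume L: "length Us = length vs" and O: "\<forall>U\<in>set Us. openin (top_of_set X) U \<and> U \<noteq> {}"
      have "(\<Inter>i<length vs. N_set (iter_seq (map ((*) k) vs ! i) f) (Us ! i) \<delta>) \<noteq> {}"
        using H L O by blast
      then obtain n where n: "n \<in> (\<Inter>i<length vs. N_set (iter_seq (map ((*) k) vs ! i) f) (Us ! i) \<delta>)"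
        by blast
      have "n \<in> (\<Inter>i<length vs. N_set (iter_seq (vs ! i) ?F) (Us ! i) \<delta>)"
      proof
        fix i assume i: "i \<in> {..<length vs}"
        then have "n \<in> N_set (iter_seq (k * (vs ! i)) f) (Us ! i) \<delta>" using n by auto
        then show "n \<in> N_set (iter_seq (vs ! i) ?F) (Us ! i) \<delta>" using A1 by blast
      qed
      then show "(\<Inter>i<length vs. N_set (iter_seq (vs ! i) ?F) (Us ! i) \<delta>) \<noteq> {}" by blast
    qed
  qed
  have S2: "multi_sensitive X f vs" if "multi_sensitive X ?F vs" for vs
  proof -
    from that obtain \<delta> where d: "\<delta> > 0" and H: "\<forall>Us. length Us = length vs \<longrightarrow>
        (\<forall>U\<in>set Us. openin (top_of_set X) U \<and> U \<noteq> {}) \<longrightarrow>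
        (\<Inter>i<length vs. N_set (iter_seq (vs ! i) ?F) (Us ! i) \<delta>) \<noteq> {}"
      unfolding multi_sensitive_def by blast
    show ?thesis unfolding multi_sensitive_def
    proof (intro exI[of _ \<delta>] conjI allI impI d)
      fix Us :: "'a set list"
      assume L: "length Us = length vs" and O: "\<forall>U\<in>set Us. openin (top_of_set X) U \<and> U \<noteq> {}"
      have "(\<Inter>i<length vs. N_set (iter_seq (vs ! i) ?F) (Us ! i) \<delta>) \<noteq> {}"
        using H L O by blast
      then obtain n where n: "n \<in> (\<Inter>i<length vs. N_set (iter_seq (vs ! i) ?F) (Us ! i) \<delta>)"
        by blast
      have "n * k \<in> (\<Inter>i<length vs. N_set (iter_seq (vs ! i) f) (Us ! i) \<delta>)"
      proof
        fix i assume i: "i \<in> {..<length vs}"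
        then have "n \<in> N_set (iter_seq (vs ! i) ?F) (Us ! i) \<delta>" using n by blast
        then show "n * k \<in> N_set (iter_seq (vs ! i) f) (Us ! i) \<delta>" by (rule A2)
      qed
      then show "(\<Inter>i<length vs. N_set (iter_seq (vs ! i) f) (Us ! i) \<delta>) \<noteq> {}" by blast
    qed
  qed
  have S3: "multi_sensitive X ?F [1..<n+1]" if "multi_sensitive X f [1..<k * n+1]" "n \<ge> 1" for n
  proof -
    from that(1) obtain \<delta> where d: "\<delta> > 0" and H: "\<forall>Us. length Us = length [1..<k * n+1] \<longrightarrow>
        (\<forall>U\<in>set Us. openin (top_of_set X) U \<and> U \<noteq> {}) \<longrightarrow>
        (\<Inter>i<length [1..<k * n+1]. N_set (iter_seq ([1..<k * n+1] ! i) f) (Us ! i) \<delta>) \<noteq> {}"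
      unfolding multi_sensitive_def by blast
    show ?thesis unfolding multi_sensitive_def
    proof (intro exI[of _ \<delta>] conjI allI impI d)
      fix Us :: "'a set list"
      assume L: "length Us = length [1..<n+1]" and O: "\<forall>U\<in>set Us. openin (top_of_set X) U \<and> U \<noteq> {}"
      have Ln: "length Us = n" using L by simp
      define Us' where "Us' = map (\<lambda>j. Us ! ((j+1) div k - 1)) [0..<k * n]"
      have idx: "(j+1) div k - 1 < n" if "j < k * n" for j
      proof -
        have "j + 1 \<le> k * n" using that by simp
        then have "(j+1) div k \<le> (k * n) div k" by (rule div_le_mono)
        then have "(j+1) div k \<le> n" using assms(4) by simp
        then show ?thesis using \<open>n \<ge> 1\<close> by linarith
      qed
      have L': "length Us' = length [1..<k * n+1]" using assms(4) that(2) by (simp add: Us'_def)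
      have O': "\<forall>U\<in>set Us'. openin (top_of_set X) U \<and> U \<noteq> {}"
      proof
        fix U assume "U \<in> set Us'"
        then obtain j where j: "j < k * n" and U: "U = Us ! ((j+1) div k - 1)"
          unfolding Us'_def by auto
        have "U \<in> set Us" using idx[OF j] Ln U by simp
        then show "openin (top_of_set X) U \<and> U \<noteq> {}" using O by blast
      qed
      have "(\<Inter>i<length [1..<k * n+1]. N_set (iter_seq ([1..<k * n+1] ! i) f) (Us' ! i) \<delta>) \<noteq> {}"
        using H L' O' by blast
      then obtain m where M: "m \<in> (\<Inter>j<length [1..<k * n+1]. N_set (iter_seq ([1..<k * n+1] ! j) f) (Us' ! j) \<delta>)"
        by blast
      have "m \<in> (\<Inter>i<length [1..<n+1]. N_set (iter_seq ([1..<n+1] ! i) ?F) (Us ! i) \<delta>)"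
      proof
        fix i assume "i \<in> {..<length [1..<n+1]}"
        then have i: "i < n" by simp
        let ?j = "k * i + k - 1"
        have "k * (i+1) \<le> k * n" using i by (intro mult_le_mono2) simp
        then have jl: "?j < k * n" using assms(4) by simp
        have dv: "(?j+1) div k = i+1" using assms(4) by simp
        have "Us' ! ?j = Us ! i" using jl dv by (simp add: Us'_def)
        moreover have "[1..<k * n+1] ! ?j = k * (i+1)" using jl assms(4) by simp
        moreover have "m \<in> N_set (iter_seq ([1..<k * n+1] ! ?j) f) (Us' ! ?j) \<delta>"
          using M jl by simp
        ultimately have "m \<in> N_set (iter_seq (k * (i+1)) f) (Us ! i) \<delta>" by simp
        then have "m \<in> N_set (iter_seq (i+1) ?F) (Us ! i) \<delta>" using A1 by blast
        then show "m \<in> N_set (iter_seq ([1..<n+1] ! i) ?F) (Us ! i) \<delta>" using i by simp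
      qed
      then show "(\<Inter>i<length [1..<n+1]. N_set (iter_seq ([1..<n+1] ! i) ?F) (Us ! i) \<delta>) \<noteq> {}"
        by blast
    qed
  qed
  have SMS: "strongly_multi_sensitive X f \<longleftrightarrow> strongly_multi_sensitive X ?F"
  proof
    assume h: "strongly_multi_sensitive X f"
    show "strongly_multi_sensitive X ?F" unfolding strongly_multi_sensitive_def
    proof (intro allI impI)
      fix vs :: "nat list" assume "vs \<noteq> []" "\<forall>v\<in>set vs. 1 \<le> v"
      then have "multi_sensitive X f (map ((*) k) vs)"
        using h assms(4) unfolding strongly_multi_sensitive_def by auto
      then show "multi_sensitive X ?F vs" by (rule S1)
    qed
  next
    assume h: "strongly_multi_sensitive X ?F"
    then show "strongly_multi_sensitive X f"
      using S2 unfolding strongly_multi_sensitive_def by blast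
  qed
  have NS: "N_sensitive X f \<longleftrightarrow> N_sensitive X ?F"
  proof
    assume h: "N_sensitive X f"
    show "N_sensitive X ?F" unfolding N_sensitive_def
    proof (intro allI impI)
      fix n :: nat assume n: "n \<ge> 1"
      then have "k * n \<ge> 1" using assms(4) by simp
      then have "multi_sensitive X f [1..<k * n+1]" using h unfolding N_sensitive_def by blast
      then show "multi_sensitive X ?F [1..<n+1]" using S3 n by blast
    qed
  next
    assume h: "N_sensitive X ?F"
    then show "N_sensitive X f" using S2 unfolding N_sensitive_def by blast
  qed
  show ?thesis using SMS NS by blast
qed

end
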